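(* Assume the setting below, let $\nu\in(0,1)$, $\mu>0$, let $\theta^*\in\Theta$ be fixed (non-random), and let $s>0$ satisfy $$s<\frac{2\mu n}{C_b\,\nu\,(\nu C_b+4\mu b)} .$$ Then for every $\Theta$-valued random vector $\hat\theta$ that is a measurable function of the data $\mathcal D$, $$\mathbb E\exp\Big[s\Big(\nu(P-P_n)\Big(\sum_{j=1}^M(\hat\theta_j-\theta^*_j)\ell_{e_j}\Big)-\mu\,\hat\theta^\top\mathbf H\theta^*\Big)-K(\hat\theta)\Big]\le1 .$$
   Context: Setting: $(X,Y)$ random pair in $\mathcal X\times\mathbb R$ with $|Y|\le b$ a.s. ($b>0$); data $\mathcal D=\{(X_i,Y_i)\}_{i=1}^n$ i.i.d. copies of $(X,Y)$; $f_1,\dots,f_M$ deterministic measurable functions with $\max_j|f_j(X)|\le b$ a.s.; $\Theta=\{\theta\in\mathbb R^M:\theta_j\ge0,\ \sum_j\theta_j=1\}$, $e_j$ canonical basis of $\mathbb R^M$; $\|f\|_2=\sqrt{\mathbb E f(X)^2}$; $\mathbf H$ is the $M\times M$ matrix with $\mathbf H_{jk}=\|f_j-f_k\|_2^2$; prior $\pi$ with $\pi_j>0$, $\sum_j\pi_j=1$, and $K(\theta)=\sum_j\theta_j\log(1/\pi_j)$. The loss satisfies: for all $f,g\in[-b,b]$, $|\ell(Y,f)-\ell(Y,g)|\le C_b|f-g|$ a.s. Notation: $\ell_{e_j}(y,x)=\ell(y,f_j(x))$; for $g(y,x)$ (possibly data-dependent), $Pg=\mathbb E[g(Y,X)\mid\mathcal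 D]$ with $(X,Y)$ independent of $\mathcal D$, and $P_ng=\frac1n\sum_ig(Y_i,X_i)$. *)

theory Defs
  imports "HOL-Probability.Probability"
begin

definition simplexM :: "nat \<Rightarrow> (nat \<Rightarrow> real) set" where
  "simplexM M = {\<theta>. (\<forall>j<M. 0 \<le> \<theta> j) \<and> (\<Sum>j<M. \<theta> j) = 1}"

definition Kdiv :: "nat \<Rightarrow> (nat \<Rightarrow> real) \<Rightarrow> (nat \<Rightarrow> real) \<Rightarrow> real" where
  "Kdiv M \<pi> \<theta> = (\<Sum>j<M. \<theta> j * ln (1 / \<pi> j))"

text \<open>H_jk = squared L2 distance of f_j and f_k under the law of X (D is the law of (X,Y)).\<close>
definition Hmat :: "('x \<times> real) measure \<Rightarrow> (nat \<Rightarrow> 'x \<Rightarrow> real) \<Rightarrow> nat \<Rightarrow> nat \<Rightarrow> real" where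
  "Hmat D f j k = (\<integral>z. (f j (fst z) - f k (fst z))\<^sup>2 \<partial>D)"

end

theory Submission
  imports Defs "HOL-Probability.Hoeffding"
begin

lemma exp_quad_bound:
  fixes y :: real assumes "\<bar>y\<bar> < 1"
  shows "exp y \<le> 1 + y + y^2 / (2 * (1 - \<bar>y\<bar>))"
proof -
  obtain t where t: "\<bar>t\<bar> \<le> \<bar>y\<bar>" and e: "exp y = (\<Sum>m<2. (y ^ m) / fact m) + (exp t / fact 2) * y ^ 2"
    using Maclaurin_exp_le[of y 2] by blast
  have e2: "exp y = 1 + y + exp t / 2 * y^2" using e by (simp add: numeral_2_eq_2)
  have "exp t \<le> exp \<bar>y\<bar>" using t by simp
  also have "exp \<bar>y\<bar> \<le> 1 / (1 - \<bar>y\<bar>)"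
  proof -
    have "1 - \<bar>y\<bar> \<le> exp (- \<bar>y\<bar>)" using exp_ge_add_one_self[of "-\<bar>y\<bar>"] by simp
    hence "(1 - \<bar>y\<bar>) * exp \<bar>y\<bar> \<le> 1" using mult_right_mono[of "1 - \<bar>y\<bar>" "exp (-\<bar>y\<bar>)" "exp \<bar>y\<bar>"]
      by (simp add: exp_minus field_simps)
    thus ?thesis using assms by (simp add: field_simps)
  qed
  finally have et: "exp t \<le> 1 / (1 - \<bar>y\<bar>)" .
  have "exp t / 2 * y^2 \<le> (1 / (1 - \<bar>y\<bar>)) / 2 * y^2"
    by (intro mult_right_mono divide_right_mono et) auto
  also have "\<dots> = y^2 / (2 * (1 - \<bar>y\<bar>))" by simp
  finally show ?thesis using e2 by simp
qed

lemma sq_weighted: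
  fixes w d :: "nat \<Rightarrow> real"
  assumes "\<And>k. k \<in> A \<Longrightarrow> w k \<ge> 0" "(\<Sum>k\<in>A. w k) = 1" "finite A"
  shows "(\<Sum>k\<in>A. w k * d k)^2 \<le> (\<Sum>k\<in>A. w k * (d k)^2)"
proof -
  define m where "m = (\<Sum>k\<in>A. w k * d k)"
  have "0 \<le> (\<Sum>k\<in>A. w k * (d k - m)^2)" using assms by (intro sum_nonneg) auto
  also have "\<dots> = (\<Sum>k\<in>A. w k * (d k)^2) - 2 * m * (\<Sum>k\<in>A. w k * d k) + m^2 * (\<Sum>k\<in>A. w k)"
    by (simp add: power2_diff algebra_simps sum.distrib sum_subtractf sum_distrib_left sum_distrib_right)
  finally show ?thesis using assms(2) unfolding m_def by (simp add: power2_eq_square)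
qed

lemma mgf_bound:
  fixes D :: "'a measure" and g :: "'a \<Rightarrow> real"
  assumes P: "prob_space D" and gm: "g \<in> borel_measurable D"
    and gb: "AE z in D. \<bar>g z\<bar> \<le> c" and l0: "0 \<le> l" and lc: "l * c < 1"
  shows "integrable D (\<lambda>z. exp (l * ((\<integral>z. g z \<partial>D) - g z)))"
    and "(\<integral>z. exp (l * ((\<integral>z. g z \<partial>D) - g z)) \<partial>D)
           \<le> exp (l^2 * (\<integral>z. (g z)^2 \<partial>D) / (2 * (1 - l * c)))"
proof -
  interpret prob_space D by (rule P)
  define E where "E = (\<integral>z. g z \<partial>D)"
  define K where "K = l^2 / (2 * (1 - l * c))"
  have ig: "integrable D g"
    using gb gm by (intro integrable_const_bound[where B=c]) auto
  have ig2: "integrable D (\<lambda>z. (g z)^2)"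
    using gb gm by (intro integrable_const_bound[where B="c^2"])
       (auto elim!: eventually_mono, metis abs_ge_zero power2_abs power_mono)
  have ie: "integrable D (\<lambda>z. exp (- l * g z))"
  proof (rule integrable_const_bound[where B="exp (l * c)"])
    show "AE x in D. norm (exp (- l * g x)) \<le> exp (l * c)"
      using gb
    proof (rule eventually_mono)
      fix x assume "\<bar>g x\<bar> \<le> c"
      hence "- g x \<le> c" by simp
      hence "l * (- g x) \<le> l * c" using l0 by (rule mult_left_mono)
      thus "norm (exp (- l * g x)) \<le> exp (l * c)" by simp
    qed
  qed (use gm in simp)
  show ie2: "integrable D (\<lambda>z. exp (l * ((\<integral>z. g z \<partial>D) - g z)))"
  proof -
    have i1: "integrable D (\<lambda>z. exp (l * E) * exp (- l * g z))" using ie by (rule integrable_mult_right)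
    have eq: "(\<lambda>z. exp (l * E) * exp (- l * g z)) = (\<lambda>z. exp (l * (E - g z)))"
      by (auto simp: exp_add[symmetric] algebra_simps)
    have "integrable D (\<lambda>z. exp (l * (E - g z)))" using i1 unfolding eq .
    thus ?thesis unfolding E_def .
  qed
  have pw: "AE z in D. exp (- l * g z) \<le> 1 + (- l * g z) + K * (g z)^2"
    using gb
  proof (rule eventually_mono)
    fix z assume gz: "\<bar>g z\<bar> \<le> c"
    have ay: "\<bar>- l * g z\<bar> \<le> l * c" using gz l0 by (simp add: abs_mult mult_left_mono)
    hence ay1: "\<bar>- l * g z\<bar> < 1" using lc by simp
    have "exp (- l * g z) \<le> 1 + (- l * g z) + (- l * g z)^2 / (2 * (1 - \<bar>- l * g z\<bar>))"
      by (rule exp_quad_bound[OF ay1])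
    also have "(- l * g z)^2 / (2 * (1 - \<bar>- l * g z\<bar>)) \<le> (- l * g z)^2 / (2 * (1 - l * c))"
      using ay ay1 lc by (intro divide_left_mono mult_pos_pos) auto
    also have "(- l * g z)^2 / (2 * (1 - l * c)) = K * (g z)^2"
      unfolding K_def by (simp add: power_mult_distrib)
    finally show "exp (- l * g z) \<le> 1 + (- l * g z) + K * (g z)^2" by simp
  qed
  have "(\<integral>z. exp (- l * g z) \<partial>D) \<le> (\<integral>z. 1 + (- l * g z) + K * (g z)^2 \<partial>D)"
    using ie ig ig2 pw by (intro integral_mono_AE) auto
  also have "\<dots> = 1 - l * E + K * (\<integral>z. (g z)^2 \<partial>D)"
    using ig ig2 unfolding E_def by (simp add: prob_space)
  also have "\<dots> \<le> exp (- l * E + K * (\<integral>z. (g z)^2 \<partial>D))"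
    using exp_ge_add_one_self[of "- l * E + K * (\<integral>z. (g z)^2 \<partial>D)"] by (simp add: algebra_simps)
  finally have A: "(\<integral>z. exp (- l * g z) \<partial>D) \<le> exp (- l * E + K * (\<integral>z. (g z)^2 \<partial>D))" .
  have "(\<integral>z. exp (l * (E - g z)) \<partial>D) = (\<integral>z. exp (l * E) * exp (- l * g z) \<partial>D)"
    by (intro Bochner_Integration.integral_cong) (auto simp: exp_add[symmetric] algebra_simps)
  also have "\<dots> = exp (l * E) * (\<integral>z. exp (- l * g z) \<partial>D)" by simp
  also have "\<dots> \<le> exp (l * E) * exp (- l * E + K * (\<integral>z. (g z)^2 \<partial>D))"
    using A by (intro mult_left_mono) auto
  also have "\<dots> = exp (K * (\<integral>z. (g z)^2 \<partial>D))" by (simp add: exp_add[symmetric])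
  finally show "(\<integral>z. exp (l * ((\<integral>z. g z \<partial>D) - g z)) \<partial>D)
           \<le> exp (l^2 * (\<integral>z. (g z)^2 \<partial>D) / (2 * (1 - l * c)))"
    unfolding E_def K_def by simp
qed


lemma exp_simplex_le:
  assumes th: "\<theta> \<in> simplexM M"
  shows "exp (\<Sum>j<M. \<theta> j * a j) \<le> (\<Sum>j<M. exp (a j))"
proof -
  have t0: "\<And>j. j < M \<Longrightarrow> 0 \<le> \<theta> j" and t1: "(\<Sum>j<M. \<theta> j) = 1"
    using th by (auto simp: simplexM_def)
  have ne: "{..<M} \<noteq> {}" using t1 by auto
  have "exp (\<Sum>j<M. \<theta> j * a j) = (\<lambda>x. exp (1 * x)) (\<Sum>j<M. \<theta> j *\<^sub>R a j)" by simp
  also have "\<dots> \<le> (\<Sum>j<M. \<theta> j * (\<lambda>x. exp (1 * x)) (a j))"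
    by (rule convex_on_sum[OF _ ne convex_on_exp t1]) (auto simp: t0)
  also have "\<dots> \<le> (\<Sum>j<M. exp (a j))"
  proof (rule sum_mono)
    fix j assume j: "j \<in> {..<M}"
    have "\<theta> j \<le> (\<Sum>j<M. \<theta> j)" using j t0 by (intro member_le_sum) auto
    hence "\<theta> j \<le> 1" using t1 by simp
    thus "\<theta> j * (\<lambda>x. exp (1 * x)) (a j) \<le> exp (a j)"
      using mult_right_mono[of "\<theta> j" 1 "exp (a j)"] by simp
  qed
  finally show ?thesis .
qed

theorem mainTheorem7:
  fixes D :: "('x \<times> real) measure"
    and n M :: nat
    and b Cb \<nu> \<mu> s :: real
    and f :: "nat \<Rightarrow> 'x \<Rightarrow> real"
    and loss :: "real \<Rightarrow> real \<Rightarrow> real"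
    and \<pi> \<theta>star :: "nat \<Rightarrow> real"
    and \<theta>hat :: "(nat \<Rightarrow> 'x \<times> real) \<Rightarrow> nat \<Rightarrow> real"
  assumes D_prob: "prob_space D"
    and b_pos: "b > 0"
    and Y_bdd: "AE z in D. \<bar>snd z\<bar> \<le> b"
    and f_meas: "\<And>j. j < M \<Longrightarrow> (\<lambda>z. f j (fst z)) \<in> borel_measurable D"
    and f_bdd: "AE z in D. \<forall>j<M. \<bar>f j (fst z)\<bar> \<le> b"
    and loss_meas: "\<And>j. j < M \<Longrightarrow> (\<lambda>z. loss (snd z) (f j (fst z))) \<in> borel_measurable D"
    and Cb_pos: "Cb > 0"
    and loss_lip: "AE z in D. \<forall>u v. \<bar>u\<bar> \<le> b \<longrightarrow> \<bar>v\<bar> \<le> b \<longrightarrow>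
                      \<bar>loss (snd z) u - loss (snd z) v\<bar> \<le> Cb * \<bar>u - v\<bar>"
    and prior_pos: "\<And>j. j < M \<Longrightarrow> \<pi> j > 0"
    and prior_sum: "(\<Sum>j<M. \<pi> j) = 1"
    and nu: "0 < \<nu>" "\<nu> < 1"
    and mu: "\<mu> > 0"
    and theta_star: "\<theta>star \<in> simplexM M"
    and s_pos: "s > 0"
    and s_bound: "s < 2 * \<mu> * real n / (Cb * \<nu> * (\<nu> * Cb + 4 * \<mu> * b))"
    and thetahat_meas: "\<And>j. j < M \<Longrightarrow>
          (\<lambda>\<omega>. \<theta>hat \<omega> j) \<in> borel_measurable (PiM {..<n} (\<lambda>_. D))"
    and thetahat_simplex: "\<And>\<omega>. \<omega> \<in> space (PiM {..<n} (\<lambda>_. D)) \<Longrightarrow> \<theta>hat \<omega> \<in> simplexM M"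
  shows "(\<integral>\<^sup>+ \<omega>. ennreal (exp (
            s * (\<nu> * ((\<integral>z. (\<Sum>j<M. (\<theta>hat \<omega> j - \<theta>star j) * loss (snd z) (f j (fst z))) \<partial>D)
                     - (1 / real n) * (\<Sum>i<n. \<Sum>j<M. (\<theta>hat \<omega> j - \<theta>star j)
                                               * loss (snd (\<omega> i)) (f j (fst (\<omega> i)))))
                 - \<mu> * (\<Sum>j<M. \<Sum>k<M. \<theta>hat \<omega> j * Hmat D f j k * \<theta>star k))
            - Kdiv M \<pi> (\<theta>hat \<omega>)))
          \<partial>(PiM {..<n} (\<lambda>_. D))) \<le> 1"
proof -
  interpret P: prob_space D by (rule D_prob)
  let ?PM = "PiM {..<n} (\<lambda>_. D)"
  have ts0: "\<And>k. k < M \<Longrightarrow> 0 \<le> \<theta>star k" and ts1: "(\<Sum>k<M. \<theta>star k) = 1"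
    using theta_star by (auto simp: simplexM_def)
  have den_pos: "Cb * \<nu> * (\<nu> * Cb + 4 * \<mu> * b) > 0"
    using Cb_pos nu mu b_pos by (intro mult_pos_pos add_pos_pos) auto
  have n_pos: "n > 0"
  proof (rule ccontr)
    assume "\<not> n > 0" hence "n = 0" by simp
    thus False using s_bound s_pos by simp
  qed
  have key: "s * (Cb * \<nu> * (\<nu> * Cb + 4 * \<mu> * b)) < 2 * \<mu> * real n"
    using s_bound den_pos by (simp add: pos_less_divide_eq mult.commute)
  define L where "L j z = loss (snd z) (f j (fst z))" for j z
  define G where "G j z = L j z - (\<Sum>k<M. \<theta>star k * L k z)" for j z
  define V where "V j = (\<Sum>k<M. Hmat D f j k * \<theta>star k)" for j
  define c where "c = 2 * b * Cb"
  define lam where "lam = s * \<nu> / real n"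
  define EG where "EG j = (\<integral>z. G j z \<partial>D)" for j
  define h where "h j z = exp (lam * (EG j - G j z))" for j z
  define a where "a j \<omega> = s * (\<nu> * (EG j - (1 / real n) * (\<Sum>i<n. G j (\<omega> i))) - \<mu> * V j)
                             - ln (1 / \<pi> j)" for j \<omega>
  have Lm: "\<And>j. j < M \<Longrightarrow> L j \<in> borel_measurable D"
    unfolding L_def using loss_meas by simp
  have Gm: "\<And>j. j < M \<Longrightarrow> G j \<in> borel_measurable D"
    unfolding G_def using Lm by (intro borel_measurable_diff borel_measurable_sum borel_measurable_times) auto
  have Gdiff: "\<And>j z. G j z = (\<Sum>k<M. \<theta>star k * (L j z - L k z))"
    unfolding G_def by (simp add: algebra_simps sum_subtractf sum_distrib_right[symmetric] ts1)
  have Lip: "AE z in D. \<forall>j<M. \<forall>k<M. \<bar>L j z - L k z\<bar> \<le> Cb * \<bar>f j (fst z) - f k (fst z)\<bar>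
                 \<and> \<bar>f j (fst z) - f k (fst z)\<bar> \<le> 2 * b"
    using f_bdd loss_lip
  proof (eventually_elim)
    case (elim z)
    show ?case
    proof (intro allI impI conjI)
      fix j k assume j: "j < M" and k: "k < M"
      show "\<bar>L j z - L k z\<bar> \<le> Cb * \<bar>f j (fst z) - f k (fst z)\<bar>"
        unfolding L_def using elim j k by blast
      have "\<bar>f j (fst z)\<bar> \<le> b" "\<bar>f k (fst z)\<bar> \<le> b" using elim j k by auto
      thus "\<bar>f j (fst z) - f k (fst z)\<bar> \<le> 2 * b" by linarith
    qed
  qed
  have GB: "\<And>j. j < M \<Longrightarrow> AE z in D. \<bar>G j z\<bar> \<le> c"
  proof -
    fix j assume j: "j < M"
    show "AE z in D. \<bar>G j z\<bar> \<le> c" using Lip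
    proof (eventually_elim)
      case (elim z)
      have "\<bar>G j z\<bar> \<le> (\<Sum>k<M. \<bar>\<theta>star k * (L j z - L k z)\<bar>)" unfolding Gdiff by (rule sum_abs)
      also have "\<dots> \<le> (\<Sum>k<M. \<theta>star k * c)"
      proof (rule sum_mono)
        fix k assume k: "k \<in> {..<M}"
        have "\<bar>L j z - L k z\<bar> \<le> Cb * \<bar>f j (fst z) - f k (fst z)\<bar>" using elim j k by auto
        also have "\<dots> \<le> Cb * (2 * b)" using elim j k Cb_pos by (intro mult_left_mono) auto
        finally have "\<bar>L j z - L k z\<bar> \<le> c" unfolding c_def by (simp add: mult.commute mult.left_commute)
        thus "\<bar>\<theta>star k * (L j z - L k z)\<bar> \<le> \<theta>star k * c"
          using ts0 k by (simp add: abs_mult mult_left_mono)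
      qed
      also have "\<dots> = c" using ts1 by (simp add: sum_distrib_right[symmetric])
      finally show ?case .
    qed
  qed
  have fint: "\<And>j k. j < M \<Longrightarrow> k < M \<Longrightarrow> integrable D (\<lambda>z. (f j (fst z) - f k (fst z))^2)"
  proof -
    fix j k assume j: "j < M" and k: "k < M"
    show "integrable D (\<lambda>z. (f j (fst z) - f k (fst z))^2)"
    proof (rule P.integrable_const_bound[where B="(2*b)^2"])
      show "AE x in D. norm ((f j (fst x) - f k (fst x))^2) \<le> (2*b)^2" using Lip
      proof (eventually_elim)
        case (elim z)
        hence "\<bar>f j (fst z) - f k (fst z)\<bar> \<le> 2 * b" using j k by auto
        hence "\<bar>f j (fst z) - f k (fst z)\<bar>^2 \<le> (2*b)^2" by (intro power_mono) auto
        thus ?case by simp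
      qed
    qed (use f_meas j k in auto)
  qed
  have Vnn: "\<And>j. 0 \<le> V j"
    unfolding V_def Hmat_def using ts0 by (intro sum_nonneg mult_nonneg_nonneg integral_nonneg_AE) auto
  have G2: "\<And>j. j < M \<Longrightarrow> (\<integral>z. (G j z)^2 \<partial>D) \<le> Cb^2 * V j"
  proof -
    fix j assume j: "j < M"
    have iG2: "integrable D (\<lambda>z. (G j z)^2)"
    proof (rule P.integrable_const_bound[where B="c^2"])
      show "AE x in D. norm ((G j x)^2) \<le> c^2" using GB[OF j]
      proof (eventually_elim)
        case (elim z)
        hence "\<bar>G j z\<bar>^2 \<le> c^2" by (intro power_mono) auto
        thus ?case by simp
      qed
    qed (use Gm j in auto)
    have iR: "integrable D (\<lambda>z. Cb^2 * (\<Sum>k<M. \<theta>star k * (f j (fst z) - f k (fst z))^2))"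
      using fint j by auto
    have "(\<integral>z. (G j z)^2 \<partial>D) \<le> (\<integral>z. Cb^2 * (\<Sum>k<M. \<theta>star k * (f j (fst z) - f k (fst z))^2) \<partial>D)"
    proof (rule integral_mono_AE[OF iG2 iR])
      show "AE z in D. (G j z)^2 \<le> Cb^2 * (\<Sum>k<M. \<theta>star k * (f j (fst z) - f k (fst z))^2)"
        using Lip
      proof (eventually_elim)
        case (elim z)
        have "(G j z)^2 \<le> (\<Sum>k<M. \<theta>star k * (L j z - L k z)^2)"
          unfolding Gdiff using ts0 ts1 by (intro sq_weighted) auto
        also have "\<dots> \<le> (\<Sum>k<M. \<theta>star k * (Cb^2 * (f j (fst z) - f k (fst z))^2))"
        proof (rule sum_mono)
          fix k assume k: "k \<in> {..<M}"
          have "\<bar>L j z - L k z\<bar> \<le> Cb * \<bar>f j (fst z) - f k (fst z)\<bar>" using elim j k by auto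
          hence "\<bar>L j z - L k z\<bar>^2 \<le> (Cb * \<bar>f j (fst z) - f k (fst z)\<bar>)^2" by (intro power_mono) auto
          hence "(L j z - L k z)^2 \<le> Cb^2 * (f j (fst z) - f k (fst z))^2" by (simp add: power_mult_distrib)
          thus "\<theta>star k * (L j z - L k z)^2 \<le> \<theta>star k * (Cb^2 * (f j (fst z) - f k (fst z))^2)"
            using ts0 k by (intro mult_left_mono) auto
        qed
        also have "\<dots> = Cb^2 * (\<Sum>k<M. \<theta>star k * (f j (fst z) - f k (fst z))^2)"
          by (simp add: sum_distrib_left algebra_simps)
        finally show ?case .
      qed
    qed
    also have "\<dots> = Cb^2 * V j"
      using fint j unfolding V_def Hmat_def by (simp add: algebra_simps)
    finally show "(\<integral>z. (G j z)^2 \<partial>D) \<le> Cb^2 * V j" .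
  qed
  have lam0: "0 \<le> lam" unfolding lam_def using s_pos nu by simp
  have lamc: "lam * c < 1"
  proof -
    have "s * (4 * \<mu> * b * Cb * \<nu>) \<le> s * (Cb * \<nu> * (\<nu> * Cb + 4 * \<mu> * b))"
      using s_pos Cb_pos nu by (intro mult_left_mono) (auto simp: algebra_simps)
    hence "2 * \<mu> * (s * \<nu> * 2 * b * Cb) < 2 * \<mu> * real n" using key by (simp add: algebra_simps)
    hence "s * \<nu> * 2 * b * Cb < real n" using mu by (simp add: algebra_simps)
    thus ?thesis unfolding lam_def c_def using n_pos by (simp add: field_simps)
  qed
  have hint: "\<And>j. j < M \<Longrightarrow> integrable D (h j)"
    unfolding h_def EG_def using mgf_bound(1)[OF D_prob Gm GB lam0 lamc] by simp
  have hbd: "\<And>j. j < M \<Longrightarrow> (\<integral>z. h j z \<partial>D) \<le> exp (lam^2 * (Cb^2 * V j) / (2 * (1 - lam * c)))"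
  proof -
    fix j assume j: "j < M"
    have "(\<integral>z. h j z \<partial>D) \<le> exp (lam^2 * (\<integral>z. (G j z)^2 \<partial>D) / (2 * (1 - lam * c)))"
      unfolding h_def EG_def using mgf_bound(2)[OF D_prob Gm[OF j] GB[OF j] lam0 lamc] by simp
    also have "\<dots> \<le> exp (lam^2 * (Cb^2 * V j) / (2 * (1 - lam * c)))"
      using G2[OF j] lamc by (auto intro!: divide_right_mono mult_left_mono)
    finally show "(\<integral>z. h j z \<partial>D) \<le> exp (lam^2 * (Cb^2 * V j) / (2 * (1 - lam * c)))" .
  qed
  have arith: "\<And>j. real n * (lam^2 * (Cb^2 * V j) / (2 * (1 - lam * c))) \<le> s * \<mu> * V j"
  proof -
    fix j
    have k2: "s * \<nu>^2 * Cb^2 + 2 * \<nu> * c * s * \<mu> \<le> 2 * \<mu> * real n"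
      using key unfolding c_def by (simp add: algebra_simps power2_eq_square)
    have e1: "real n * lam^2 * Cb^2 = (s / real n) * (s * \<nu>^2 * Cb^2)"
      unfolding lam_def using n_pos by (simp add: field_simps power2_eq_square)
    have e2: "2 * (1 - lam * c) * s * \<mu> = (s / real n) * (2 * \<mu> * real n - 2 * \<nu> * c * s * \<mu>)"
      unfolding lam_def using n_pos by (simp add: field_simps)
    have Q: "real n * lam^2 * Cb^2 \<le> 2 * (1 - lam * c) * s * \<mu>"
      unfolding e1 e2 using k2 s_pos by (intro mult_left_mono) auto
    have pc: "0 < 2 * (1 - lam * c)" using lamc by simp
    have "real n * (lam^2 * (Cb^2 * V j) / (2 * (1 - lam * c)))
          = (real n * lam^2 * Cb^2) * V j / (2 * (1 - lam * c))" by (simp add: algebra_simps)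
    also have "\<dots> \<le> (2 * (1 - lam * c) * s * \<mu>) * V j / (2 * (1 - lam * c))"
      using Q Vnn pc by (intro divide_right_mono mult_right_mono) auto
    also have "\<dots> = s * \<mu> * V j" using pc by simp
    finally show "real n * (lam^2 * (Cb^2 * V j) / (2 * (1 - lam * c))) \<le> s * \<mu> * V j" .
  qed
  have Gint: "\<And>j. j < M \<Longrightarrow> integrable D (G j)"
    using Gm GB by (intro P.integrable_const_bound[where B=c]) auto
  have Lsum: "\<And>\<theta> z. \<theta> \<in> simplexM M \<Longrightarrow>
      (\<Sum>j<M. (\<theta> j - \<theta>star j) * loss (snd z) (f j (fst z))) = (\<Sum>j<M. \<theta> j * G j z)"
  proof -
    fix \<theta> z assume th: "\<theta> \<in> simplexM M"
    hence t1: "(\<Sum>j<M. \<theta> j) = 1" by (simp add: simplexM_def)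
    have "(\<Sum>j<M. \<theta> j * G j z) = (\<Sum>j<M. \<theta> j * L j z) - (\<Sum>j<M. \<theta> j) * (\<Sum>k<M. \<theta>star k * L k z)"
      unfolding G_def by (simp add: right_diff_distrib sum_subtractf sum_distrib_right)
    also have "\<dots> = (\<Sum>j<M. (\<theta> j - \<theta>star j) * L j z)"
      using t1 by (simp add: left_diff_distrib sum_subtractf)
    finally show "(\<Sum>j<M. (\<theta> j - \<theta>star j) * loss (snd z) (f j (fst z))) = (\<Sum>j<M. \<theta> j * G j z)"
      unfolding L_def by simp
  qed
  define F where "F \<omega> = (\<Sum>j<M. \<pi> j * exp (- (s * \<mu> * V j)) * (\<Prod>i<n. h j (\<omega> i)))" for \<omega>
  have pw: "\<And>\<omega>. \<omega> \<in> space ?PM \<Longrightarrow> exp (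
            s * (\<nu> * ((\<integral>z. (\<Sum>j<M. (\<theta>hat \<omega> j - \<theta>star j) * loss (snd z) (f j (fst z))) \<partial>D)
                     - (1 / real n) * (\<Sum>i<n. \<Sum>j<M. (\<theta>hat \<omega> j - \<theta>star j)
                                               * loss (snd (\<omega> i)) (f j (fst (\<omega> i)))))
                 - \<mu> * (\<Sum>j<M. \<Sum>k<M. \<theta>hat \<omega> j * Hmat D f j k * \<theta>star k))
            - Kdiv M \<pi> (\<theta>hat \<omega>)) \<le> F \<omega>"
  proof -
    fix \<omega> assume \<omega>: "\<omega> \<in> space ?PM"
    define \<theta> where "\<theta> = \<theta>hat \<omega>"
    have th: "\<theta> \<in> simplexM M" unfolding \<theta>_def using thetahat_simplex[OF \<omega>] .
    have i1: "(\<integral>z. (\<Sum>j<M. (\<theta> j - \<theta>star j) * loss (snd z) (f j (fst z))) \<partial>D) = (\<Sum>j<M. \<theta> j * EG j)"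
    proof -
      have "(\<integral>z. (\<Sum>j<M. (\<theta> j - \<theta>star j) * loss (snd z) (f j (fst z))) \<partial>D)
            = (\<integral>z. (\<Sum>j<M. \<theta> j * G j z) \<partial>D)" using Lsum[OF th] by simp
      also have "\<dots> = (\<Sum>j<M. (\<integral>z. \<theta> j * G j z \<partial>D))"
        using Gint by (intro Bochner_Integration.integral_sum) auto
      also have "\<dots> = (\<Sum>j<M. \<theta> j * EG j)" unfolding EG_def by simp
      finally show ?thesis .
    qed
    have i2: "(1 / real n) * (\<Sum>i<n. \<Sum>j<M. (\<theta> j - \<theta>star j) * loss (snd (\<omega> i)) (f j (fst (\<omega> i))))
            = (\<Sum>j<M. \<theta> j * ((1 / real n) * (\<Sum>i<n. G j (\<omega> i))))"
      unfolding Lsum[OF th] by (simp add: sum_distrib_left sum.swap[of _ "{..<n}"] algebra_simps)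
    have i3: "(\<Sum>j<M. \<Sum>k<M. \<theta> j * Hmat D f j k * \<theta>star k) = (\<Sum>j<M. \<theta> j * V j)"
      unfolding V_def by (simp add: sum_distrib_left mult.assoc)
    have i4: "Kdiv M \<pi> \<theta> = (\<Sum>j<M. \<theta> j * ln (1 / \<pi> j))" unfolding Kdiv_def by simp
    have e: "s * (\<nu> * ((\<integral>z. (\<Sum>j<M. (\<theta> j - \<theta>star j) * loss (snd z) (f j (fst z))) \<partial>D)
                     - (1 / real n) * (\<Sum>i<n. \<Sum>j<M. (\<theta> j - \<theta>star j)
                                               * loss (snd (\<omega> i)) (f j (fst (\<omega> i)))))
                 - \<mu> * (\<Sum>j<M. \<Sum>k<M. \<theta> j * Hmat D f j k * \<theta>star k))
            - Kdiv M \<pi> \<theta> = (\<Sum>j<M. \<theta> j * a j \<omega>)"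
      unfolding i1 i2 i3 i4 a_def
      by (simp add: sum_distrib_left sum_subtractf right_diff_distrib mult.left_commute)
    have ea: "\<And>j. j < M \<Longrightarrow> exp (a j \<omega>) = \<pi> j * exp (- (s * \<mu> * V j)) * (\<Prod>i<n. h j (\<omega> i))"
    proof -
      fix j assume j: "j < M"
      have pj: "\<pi> j > 0" using prior_pos[OF j] .
      have "(\<Sum>i<n. lam * (EG j - G j (\<omega> i))) = s * \<nu> * EG j - s * \<nu> * ((1 / real n) * (\<Sum>i<n. G j (\<omega> i)))"
      proof -
        have "(\<Sum>i<n. lam * (EG j - G j (\<omega> i))) = real n * lam * EG j - lam * (\<Sum>i<n. G j (\<omega> i))"
          by (simp add: right_diff_distrib sum_subtractf sum_distrib_left)
        also have "\<dots> = s * \<nu> * EG j - s * \<nu> * ((1 / real n) * (\<Sum>i<n. G j (\<omega> i)))"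
          unfolding lam_def using n_pos by (simp add: field_simps)
        finally show ?thesis .
      qed
      hence "a j \<omega> = ln (\<pi> j) + (- (s * \<mu> * V j)) + (\<Sum>i<n. lam * (EG j - G j (\<omega> i)))"
        unfolding a_def using pj by (simp add: ln_div algebra_simps)
      thus "exp (a j \<omega>) = \<pi> j * exp (- (s * \<mu> * V j)) * (\<Prod>i<n. h j (\<omega> i))"
        unfolding h_def using pj by (simp add: exp_add exp_diff exp_sum exp_minus divide_inverse)
    qed
    have "exp (\<Sum>j<M. \<theta> j * a j \<omega>) \<le> (\<Sum>j<M. exp (a j \<omega>))" by (rule exp_simplex_le[OF th])
    also have "\<dots> = F \<omega>" unfolding F_def using ea by simp
    finally show "?thesis \<omega>" using e unfolding \<theta>_def by simp
  qed
  interpret PS: product_sigma_finite "\<lambda>_::nat. D"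
    by unfold_locales
  define C where "C j = \<pi> j * exp (- (s * \<mu> * V j))" for j
  have Cnn: "\<And>j. j < M \<Longrightarrow> 0 \<le> C j" unfolding C_def using prior_pos by (simp add: less_imp_le)
  have hnn: "\<And>j z. 0 \<le> h j z" unfolding h_def by simp
  have intj: "\<And>j. j < M \<Longrightarrow> (\<integral>\<^sup>+\<omega>. ennreal (C j * (\<Prod>i<n. h j (\<omega> i))) \<partial>?PM)
                 = ennreal (C j * (\<integral>z. h j z \<partial>D) ^ n)"
  proof -
    fix j assume j: "j < M"
    have hmj[measurable]: "h j \<in> borel_measurable D" using hint[OF j] by (rule borel_measurable_integrable)
    have "(\<integral>\<^sup>+\<omega>. ennreal (C j * (\<Prod>i<n. h j (\<omega> i))) \<partial>?PM)
          = (\<integral>\<^sup>+\<omega>. ennreal (C j) * (\<Prod>i<n. ennreal (h j (\<omega> i))) \<partial>?PM)"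
      using Cnn[OF j] hnn by (intro nn_integral_cong) (simp add: ennreal_mult prod_nonneg prod_ennreal)
    also have "\<dots> = ennreal (C j) * (\<integral>\<^sup>+\<omega>. (\<Prod>i<n. ennreal (h j (\<omega> i))) \<partial>?PM)"
      by (rule nn_integral_cmult) measurable
    also have "(\<integral>\<^sup>+\<omega>. (\<Prod>i<n. ennreal (h j (\<omega> i))) \<partial>?PM) = (\<Prod>i<n. (\<integral>\<^sup>+z. ennreal (h j z) \<partial>D))"
      by (rule PS.product_nn_integral_prod[where f="\<lambda>i z. ennreal (h j z)"]) auto
    also have "(\<integral>\<^sup>+z. ennreal (h j z) \<partial>D) = ennreal (\<integral>z. h j z \<partial>D)"
      using hint[OF j] hnn by (intro nn_integral_eq_integral) auto
    finally show "(\<integral>\<^sup>+\<omega>. ennreal (C j * (\<Prod>i<n. h j (\<omega> i))) \<partial>?PM)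
                 = ennreal (C j * (\<integral>z. h j z \<partial>D) ^ n)"
      using Cnn[OF j] hnn by (simp add: ennreal_mult integral_nonneg prod_ennreal ennreal_power)
  qed
  have measj: "\<And>j. j < M \<Longrightarrow> (\<lambda>\<omega>. ennreal (C j * (\<Prod>i<n. h j (\<omega> i)))) \<in> borel_measurable ?PM"
  proof -
    fix j assume j: "j < M"
    have hmj[measurable]: "h j \<in> borel_measurable D" using hint[OF j] by (rule borel_measurable_integrable)
    show "(\<lambda>\<omega>. ennreal (C j * (\<Prod>i<n. h j (\<omega> i)))) \<in> borel_measurable ?PM" by measurable
  qed
  have bnd: "\<And>j. j < M \<Longrightarrow> C j * (\<integral>z. h j z \<partial>D) ^ n \<le> \<pi> j"
  proof -
    fix j assume j: "j < M"
    have "(\<integral>z. h j z \<partial>D) ^ n \<le> exp (lam^2 * (Cb^2 * V j) / (2 * (1 - lam * c))) ^ n"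
      using hbd[OF j] hnn by (intro power_mono integral_nonneg) auto
    also have "\<dots> = exp (real n * (lam^2 * (Cb^2 * V j) / (2 * (1 - lam * c))))"
      by (rule exp_of_nat_mult[symmetric])
    also have "\<dots> \<le> exp (s * \<mu> * V j)" using arith[of j] by simp
    finally have "C j * (\<integral>z. h j z \<partial>D) ^ n \<le> C j * exp (s * \<mu> * V j)"
      using Cnn[OF j] by (rule mult_left_mono)
    also have "\<dots> = \<pi> j" unfolding C_def by (simp add: exp_minus)
    finally show "C j * (\<integral>z. h j z \<partial>D) ^ n \<le> \<pi> j" .
  qed
  have "(\<integral>\<^sup>+ \<omega>. ennreal (exp (
            s * (\<nu> * ((\<integral>z. (\<Sum>j<M. (\<theta>hat \<omega> j - \<theta>star j) * loss (snd z) (f j (fst z))) \<partial>D)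
                     - (1 / real n) * (\<Sum>i<n. \<Sum>j<M. (\<theta>hat \<omega> j - \<theta>star j)
                                               * loss (snd (\<omega> i)) (f j (fst (\<omega> i)))))
                 - \<mu> * (\<Sum>j<M. \<Sum>k<M. \<theta>hat \<omega> j * Hmat D f j k * \<theta>star k))
            - Kdiv M \<pi> (\<theta>hat \<omega>)))
          \<partial>?PM) \<le> (\<integral>\<^sup>+\<omega>. ennreal (F \<omega>) \<partial>?PM)"
    using pw by (intro nn_integral_mono ennreal_leI) auto
  also have "\<dots> = (\<integral>\<^sup>+\<omega>. (\<Sum>j<M. ennreal (C j * (\<Prod>i<n. h j (\<omega> i)))) \<partial>?PM)"
    using Cnn hnn prior_pos[THEN less_imp_le] by (intro nn_integral_cong, subst sum_ennreal)
      (auto simp: F_def C_def h_def mult.assoc intro!: mult_nonneg_nonneg prod_nonneg)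
  also have "\<dots> = (\<Sum>j<M. (\<integral>\<^sup>+\<omega>. ennreal (C j * (\<Prod>i<n. h j (\<omega> i))) \<partial>?PM))"
    using measj by (intro nn_integral_sum) auto
  also have "\<dots> = (\<Sum>j<M. ennreal (C j * (\<integral>z. h j z \<partial>D) ^ n))"
    using intj by simp
  also have "\<dots> \<le> (\<Sum>j<M. ennreal (\<pi> j))"
    using bnd by (intro sum_mono ennreal_leI) auto
  also have "\<dots> = 1"
    using prior_pos[THEN less_imp_le] prior_sum by (subst sum_ennreal) auto
  finally show ?thesis .
qed

end
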